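(* Let $0\le m\le r\le n$. Every $L\in\mathcal L_{r,m}$ can be written uniquely as $L=\sum_{j=0}^r p_j(x)K_{rj}$ with $p_j\in\mathcal P_{r-m}$, and conversely every such sum lies in $\mathcal L_{r,m}$; i.e. $\mathcal L_{r,m}=\mathcal P_{r-m}\otimes\mathcal L_{r,r}$. Hence $\dim\mathcal L_{r,m}=(r+1)(r-m+1)$; in particular the space of operators of order at most $r$ mapping $\mathcal P_n$ into itself has dimension $(r+1)^2$.
   Context: $D=d/dx$. For $s\ge0$, $\mathcal P_s$ is the space of real polynomials in $x$ of degree at most $s$, and $\mathcal P_s=\{0\}$ for $s<0$. For $0\le m\le r$, $\mathcal L_{r,m}$ denotes the real vector space of linear differential operators $L=\sum_{i=0}^r a_i(x)D^i$ with $a_i\in\mathbb R[x]$ (order at most $r$) such that $L(\mathcal P_n)\subset\mathcal P_{n-m}$ (deficiency at least $m$ relative to $\mathcal P_n$). Pochhammer operator: $(a-xD)_k=(-1)^k(xD-a)(xD-(a-1))\cdots(xD-(a-k+1))$. $K_{rj}=\frac{1}{(r-j)!}(n-j-xD)_{r-j}D^j$. *)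

theory Defs
  imports "HOL-Computational_Algebra.Polynomial" "HOL-Library.Function_Algebras"
begin

text \<open>Linear differential operators on real polynomials are represented
semantically, as maps real poly => real poly.  D is pderiv.\<close>

type_synonym diffop = "real poly \<Rightarrow> real poly"

definition Pspace :: "nat \<Rightarrow> real poly set" where
  "Pspace s = {p. degree p \<le> s}"

definition diffop_of :: "nat \<Rightarrow> (nat \<Rightarrow> real poly) \<Rightarrow> diffop" where
  "diffop_of r a = (\<lambda>q. \<Sum>i\<le>r. a i * (pderiv ^^ i) q)"

definition Lspace :: "nat \<Rightarrow> nat \<Rightarrow> nat \<Rightarrow> diffop set" where
  "Lspace n r m = {L. (\<exists>a. L = diffop_of r a) \<and> (\<forall>q \<in> Pspace n. L q \<in> Pspace (n - m))}"

definition xD :: diffop where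
  "xD q = [:0, 1:] * pderiv q"

text \<open>Pochhammer operator (a - xD)_k = prod_{i<k} (a - i - xD)
  (equal to (-1)^k (xD - a)(xD - (a-1))...(xD - (a-k+1)); the factors commute).\<close>
fun poch_op :: "real \<Rightarrow> nat \<Rightarrow> diffop" where
  "poch_op a 0 = (\<lambda>q. q)"
| "poch_op a (Suc k) = (\<lambda>q. smult (a - real k) (poch_op a k q) - xD (poch_op a k q))"

definition Kop :: "nat \<Rightarrow> nat \<Rightarrow> nat \<Rightarrow> diffop" where
  "Kop n r j = (\<lambda>q. smult (1 / fact (r - j)) (poch_op (real n - real j) (r - j) ((pderiv ^^ j) q)))"

definition Ksum :: "nat \<Rightarrow> nat \<Rightarrow> (nat \<Rightarrow> real poly) \<Rightarrow> diffop" where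
  "Ksum n r p = (\<lambda>q. \<Sum>j\<le>r. p j * Kop n r j q)"

definition op_scale :: "real \<Rightarrow> diffop \<Rightarrow> diffop" where
  "op_scale c L = (\<lambda>q. smult c (L q))"

end

theory Submission
  imports Defs
begin

definition ff :: "nat \<Rightarrow> nat \<Rightarrow> real" where "ff j k = (\<Prod>i<j. real (k - i))"

lemma ff_zero: "k < j \<Longrightarrow> ff j k = 0"
  unfolding ff_def by (auto simp: prod_zero_iff intro!: bexI[where x=k])

lemma ff_nz: "j \<le> k \<Longrightarrow> ff j k \<noteq> 0"
  unfolding ff_def by (auto simp: prod_zero_iff)

lemma dj_monom: "(pderiv ^^ j) (monom c k) = monom (ff j k * c) (k - j)"
proof (induction j arbitrary: c)
  case 0 then show ?case by (simp add: ff_def)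
next
  case (Suc j)
  show ?case by (simp add: Suc pderiv_monom ff_def mult_ac)
qed

lemma xD_monom: "xD (monom c d) = monom (real d * c) d"
  unfolding xD_def pderiv_monom
  by (cases d) (auto simp: monom_Suc)

lemma poch_monom: "poch_op a k (monom c d) = monom ((\<Prod>i<k. (a - real i - real d)) * c) d"
  by (induction k) (auto simp: xD_monom smult_monom algebra_simps diff_monom)

lemma xD_add: "xD (p + q) = xD p + xD q" unfolding xD_def by (simp add: pderiv_add algebra_simps)
lemma xD_smult: "xD (smult c p) = smult c (xD p)" unfolding xD_def by (simp add: pderiv_smult)

lemma poch_add: "poch_op a k (p + q) = poch_op a k p + poch_op a k q"
  by (induction k) (auto simp: xD_add smult_add_right algebra_simps)
lemma poch_smult: "poch_op a k (smult c p) = smult c (poch_op a k p)"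
  by (induction k) (auto simp: xD_smult algebra_simps smult_diff_right)


definition cK :: "nat \<Rightarrow> nat \<Rightarrow> nat \<Rightarrow> nat \<Rightarrow> real" where
  "cK n r j k = (1 / fact (r - j)) * (\<Prod>i<r - j. real n - real j - real i - real (k - j)) * ff j k"

lemma Kop_monom: "Kop n r j (monom 1 k) = monom (cK n r j k) (k - j)"
  unfolding Kop_def cK_def by (simp add: dj_monom poch_monom smult_monom mult_ac)

lemma cK_zero1: "k < j \<Longrightarrow> cK n r j k = 0"
  unfolding cK_def by (simp add: ff_zero)

lemma cK_zero2: assumes "j \<le> k" "k \<le> n" "n - r + j < k" "r \<le> n"
  shows "cK n r j k = 0"
proof -
  have "n - k \<in> {..<r - j}" using assms by auto
  moreover have "real n - real j - real (n - k) - real (k - j) = 0" using assms by (simp add: of_nat_diff)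
  ultimately have "\<exists>a\<in>{..<r - j}. real n - real j - real a - real (k - j) = 0" by blast
  then have "(\<Prod>i<r - j. real n - real j - real i - real (k - j)) = 0"
    by (simp add: prod_zero_iff)
  then show ?thesis unfolding cK_def by simp
qed

lemma cK_nz: assumes "j \<le> k" "k \<le> n - r + j" "r \<le> n" "j \<le> r"
  shows "cK n r j k \<noteq> 0"
proof -
  have "\<forall>i\<in>{..<r - j}. real n - real j - real i - real (k - j) \<noteq> 0"
    using assms by (auto simp: of_nat_diff)
  then show ?thesis unfolding cK_def using ff_nz[OF assms(1)] by (simp add: prod_zero_iff)
qed

lemma smult_sum_right: "smult c (sum f A) = (\<Sum>x\<in>A. smult c (f x))"
  by (induction A rule: infinite_finite_induct) (auto simp: smult_add_right)

definition lin :: "diffop \<Rightarrow> bool" where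
  "lin L \<longleftrightarrow> (\<forall>p q. L (p + q) = L p + L q) \<and> (\<forall>c p. L (smult c p) = smult c (L p))"

lemma lin_zero: "lin L \<Longrightarrow> L 0 = 0"
  unfolding lin_def by (metis smult_0_left)

lemma lin_sum: "lin L \<Longrightarrow> L (sum f A) = (\<Sum>x\<in>A. L (f x))"
  by (induction A rule: infinite_finite_induct) (auto simp: lin_zero lin_def)

lemma lin_expand: "lin L \<Longrightarrow> L q = (\<Sum>k\<le>degree q. smult (coeff q k) (L (monom 1 k)))"
proof -
  assume l: "lin L"
  have "L q = L (\<Sum>k\<le>degree q. smult (coeff q k) (monom 1 k))"
    by (simp add: smult_monom poly_as_sum_of_monoms)
  also have "\<dots> = (\<Sum>k\<le>degree q. smult (coeff q k) (L (monom 1 k)))"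
    using l by (simp add: lin_sum) (simp add: lin_def)
  finally show ?thesis .
qed

lemma lin_Kop: "lin (Kop n r j)"
  unfolding lin_def Kop_def by (simp add: higher_pderiv_add higher_pderiv_smult poch_add poch_smult
     smult_add_right mult_ac)

lemma lin_Ksum: "lin (Ksum n r p)"
  using lin_Kop[of n r] unfolding lin_def Ksum_def
  by (simp add: sum.distrib algebra_simps smult_sum_right)

lemma deg_Kop: assumes "degree q \<le> n" "j \<le> r" "r \<le> n"
  shows "degree (Kop n r j q) \<le> n - r"
proof -
  have "Kop n r j q = (\<Sum>k\<le>degree q. smult (coeff q k) (monom (cK n r j k) (k - j)))"
    using lin_expand[OF lin_Kop] by (simp add: Kop_monom)
  also have "degree \<dots> \<le> n - r"
  proof (rule degree_sum_le)
    fix k assume k: "k \<in> {..degree q}"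
    show "degree (smult (coeff q k) (monom (cK n r j k) (k - j))) \<le> n - r"
    proof (cases "j \<le> k \<and> k \<le> n - r + j")
      case True then show ?thesis
        by (meson degree_monom_le degree_smult_le diff_le_mono2 le_diff_conv order_trans diff_le_mono)
    next
      case False
      then have "cK n r j k = 0" using cK_zero1 cK_zero2 assms k
        by (metis atMost_iff not_le order_trans)
      then show ?thesis by simp
    qed
  qed simp
  finally show ?thesis .
qed


definition isdiff :: "nat \<Rightarrow> diffop \<Rightarrow> bool" where
  "isdiff r L \<longleftrightarrow> (\<exists>a. L = diffop_of r a)"

lemma isdiff_mono: assumes "isdiff r L" "r \<le> r'" shows "isdiff r' L"
proof -
  obtain a where a: "L = diffop_of r a" using assms unfolding isdiff_def by blast
  have "L = diffop_of r' (\<lambda>i. if i \<le> r then a i else 0)"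
  proof
    fix q
    have "diffop_of r' (\<lambda>i. if i \<le> r then a i else 0) q
        = (\<Sum>i\<in>{..r'}. if i \<le> r then a i * (pderiv ^^ i) q else 0)"
      unfolding diffop_of_def by (intro sum.cong) auto
    also have "\<dots> = (\<Sum>i\<in>{..r}. if i \<le> r then a i * (pderiv ^^ i) q else 0)"
      by (rule sum.mono_neutral_right) (use assms in auto)
    also have "\<dots> = (\<Sum>i\<in>{..r}. a i * (pderiv ^^ i) q)" by simp
    finally show "L q = diffop_of r' (\<lambda>i. if i \<le> r then a i else 0) q"
      by (simp add: a diffop_of_def)
  qed
  then show ?thesis unfolding isdiff_def by blast
qed

lemma isdiff_add: assumes "isdiff r L1" "isdiff r L2" shows "isdiff r (\<lambda>q. L1 q + L2 q)"
proof -
  obtain a b where a: "L1 = diffop_of r a" and b: "L2 = diffop_of r b"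
    using assms unfolding isdiff_def by blast
  show ?thesis unfolding isdiff_def
    by (rule exI[of _ "\<lambda>i. a i + b i"]) (simp add: a b diffop_of_def sum.distrib algebra_simps)
qed

lemma isdiff_zero: "isdiff r (\<lambda>q. 0)"
  unfolding isdiff_def diffop_of_def by (auto intro!: exI[where x="\<lambda>i. 0"])

lemma isdiff_sum: "(\<And>x. x \<in> A \<Longrightarrow> isdiff r (L x)) \<Longrightarrow> isdiff r (\<lambda>q. \<Sum>x\<in>A. L x q)"
proof (induction A rule: infinite_finite_induct)
  case (insert x F)
  then show ?case by (simp add: isdiff_add)
qed (auto simp: isdiff_zero)

lemma isdiff_mult: assumes "isdiff r L" shows "isdiff r (\<lambda>q. c * L q)"
proof -
  obtain a where a: "L = diffop_of r a" using assms unfolding isdiff_def by blast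
  show ?thesis unfolding isdiff_def
    by (rule exI[of _ "\<lambda>i. c * a i"]) (simp add: a diffop_of_def sum_distrib_left algebra_simps)
qed

lemma isdiff_smult: "isdiff r L \<Longrightarrow> isdiff r (\<lambda>q. smult c (L q))"
  using isdiff_mult[of r L "[:c:]"] by simp

lemma isdiff_neg: "isdiff r L \<Longrightarrow> isdiff r (\<lambda>q. - L q)"
  using isdiff_smult[of r L "-1"] by simp

lemma isdiff_diff: "isdiff r L1 \<Longrightarrow> isdiff r L2 \<Longrightarrow> isdiff r (\<lambda>q. L1 q - L2 q)" (is "_ \<Longrightarrow> _ \<Longrightarrow> ?g")
proof -
  assume "isdiff r L1" "isdiff r L2"
  then have "isdiff r (\<lambda>q. L1 q + - L2 q)" by (intro isdiff_add isdiff_neg)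
  then show ?thesis by simp
qed

lemma isdiff_single: assumes "i \<le> r" shows "isdiff r (\<lambda>q. c * (pderiv ^^ i) q)"
proof -
  have "diffop_of r (\<lambda>l. if l = i then c else 0) q = c * (pderiv ^^ i) q" for q
  proof -
    have "diffop_of r (\<lambda>l. if l = i then c else 0) q = (\<Sum>l\<le>r. if l = i then c * (pderiv ^^ l) q else 0)"
      unfolding diffop_of_def by (intro sum.cong) auto
    also have "\<dots> = c * (pderiv ^^ i) q" using assms by (subst sum.delta) auto
    finally show ?thesis .
  qed
  then show ?thesis unfolding isdiff_def by (intro exI[of _ "\<lambda>l. if l = i then c else 0"]) auto
qed

lemma pderiv_sum': "pderiv (sum f A) = (\<Sum>x\<in>A. pderiv (f x))"
  by (induction A rule: infinite_finite_induct) (auto simp: pderiv_add)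

lemma isdiff_xD: assumes "isdiff r L" shows "isdiff (Suc r) (\<lambda>q. xD (L q))"
proof -
  obtain a where a: "L = diffop_of r a" using assms unfolding isdiff_def by blast
  have eq: "(\<lambda>q. xD (L q)) = (\<lambda>q. \<Sum>i\<le>r. ([:0,1:] * pderiv (a i)) * (pderiv ^^ i) q
                                   + ([:0,1:] * a i) * (pderiv ^^ Suc i) q)"
    unfolding a diffop_of_def xD_def
    by (simp add: pderiv_sum' sum_distrib_left pderiv_mult algebra_simps)
  show ?thesis unfolding eq
    by (intro isdiff_sum isdiff_add isdiff_single) auto
qed

lemma isdiff_poch: "isdiff (k + j) (\<lambda>q. poch_op a k ((pderiv ^^ j) q))"
proof (induction k)
  case 0
  then show ?case using isdiff_single[of j j 1] by simp
next
  case (Suc k)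
  have "isdiff (Suc k + j) (\<lambda>q. poch_op a k ((pderiv ^^ j) q))"
    using Suc isdiff_mono by (metis le_add1 add_Suc plus_1_eq_Suc add.commute le_SucI order_refl)
  then show ?case
    using isdiff_diff[OF isdiff_smult isdiff_xD[OF Suc]] by simp
qed

lemma isdiff_Kop: "j \<le> r \<Longrightarrow> isdiff r (Kop n r j)"
  unfolding Kop_def using isdiff_smult[OF isdiff_poch[of "r - j" j]] by simp

lemma isdiff_Ksum: "isdiff r (Ksum n r p)"
  unfolding Ksum_def by (intro isdiff_sum isdiff_mult isdiff_Kop) auto


lemma diffop_monom: "diffop_of r a (monom 1 k) = (\<Sum>i\<le>r. a i * monom (ff i k) (k - i))"
  unfolding diffop_of_def by (simp add: dj_monom)

lemma Ksum_monom: "Ksum n r p (monom 1 k) = (\<Sum>j\<le>r. p j * monom (cK n r j k) (k - j))"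
  unfolding Ksum_def by (simp add: Kop_monom)

lemma tri:
  fixes p :: "nat \<Rightarrow> real poly"
  assumes c0: "\<And>j k. k < j \<Longrightarrow> c j k = 0" and c1: "\<And>k. k \<le> r \<Longrightarrow> c k k \<noteq> 0"
    and s: "\<And>k. k \<le> r \<Longrightarrow> (\<Sum>j\<le>r. p j * monom (c j k) (k - j)) = 0"
    and kr: "k \<le> r"
  shows "p k = 0"
  using kr
proof (induction k rule: less_induct)
  case (less k)
  have "0 = (\<Sum>j\<le>r. p j * monom (c j k) (k - j))" using s less by simp
  also have "\<dots> = p k * monom (c k k) (k - k) + (\<Sum>j\<in>{..r} - {k}. p j * monom (c j k) (k - j))"
    using less by (subst sum.remove[of _ k]) auto
  moreover have "(\<Sum>j\<in>{..r} - {k}. p j * monom (c j k) (k - j)) = 0"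
  proof (rule sum.neutral, intro ballI)
    fix j assume "j \<in> {..r} - {k}"
    then have j: "j \<le> r" "j \<noteq> k" by auto
    show "p j * monom (c j k) (k - j) = 0"
    proof (cases "j < k")
      case True then show ?thesis using less j by simp
    next
      case False then show ?thesis using c0[of k j] j by simp
    qed
  qed
  ultimately have "smult (c k k) (p k) = 0" by (simp add: monom_0)
  then show ?case using c1 less by simp
qed

lemma Ksum_plus: "Ksum n r (\<lambda>j. p j + p' j) z = Ksum n r p z + Ksum n r p' z"
  unfolding Ksum_def by (simp add: sum.distrib algebra_simps)

lemma Ksum_minus: "Ksum n r (\<lambda>j. p j - p' j) z = Ksum n r p z - Ksum n r p' z"
  unfolding Ksum_def by (simp add: sum_subtractf algebra_simps)

lemma Ksum_single: "s \<le> r \<Longrightarrow> Ksum n r (\<lambda>j. if j = s then v else 0) z = v * Kop n r s z"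
  unfolding Ksum_def by (simp add: if_distrib[of "\<lambda>x. x * _"] cong: if_cong)

lemma Ksum_unique: assumes "r \<le> n" "Ksum n r p = Ksum n r p'" "j \<le> r" shows "p j = p' j"
proof -
  have "(\<lambda>j. p j - p' j) j = 0"
  proof (rule tri[where c = "cK n r" and r = r])
    show "cK n r j k = 0" if "k < j" for j k using that cK_zero1 by blast
    show "cK n r k k \<noteq> 0" if "k \<le> r" for k using that assms by (intro cK_nz) auto
    show "(\<Sum>j\<le>r. (p j - p' j) * monom (cK n r j k) (k - j)) = 0" for k
      using Ksum_minus[of n r p p' "monom 1 k"] assms(2) by (simp add: Ksum_monom)
  qed fact
  then show ?thesis by simp
qed

lemma diffop_zero: assumes "\<And>k. k \<le> r \<Longrightarrow> diffop_of r a (monom 1 k) = 0"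
  shows "diffop_of r a q = 0"
proof -
  have "a i = 0" if "i \<le> r" for i
  proof (rule tri[where c = ff and r = r])
    show "ff j k = 0" if "k < j" for j k using that ff_zero by blast
    show "ff k k \<noteq> 0" for k by (simp add: ff_nz)
    show "(\<Sum>j\<le>r. a j * monom (ff j k) (k - j)) = 0" if "k \<le> r" for k
      using assms[OF that] by (simp add: diffop_monom)
  qed fact
  then show ?thesis unfolding diffop_of_def by simp
qed

lemma isdiff_eq: assumes "isdiff r L1" "isdiff r L2" "\<And>k. k \<le> r \<Longrightarrow> L1 (monom 1 k) = L2 (monom 1 k)"
  shows "L1 = L2"
proof
  fix q
  obtain a b where a: "L1 = diffop_of r a" and b: "L2 = diffop_of r b"
    using assms unfolding isdiff_def by blast
  have d: "diffop_of r (\<lambda>i. a i - b i) z = diffop_of r a z - diffop_of r b z" for z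
    unfolding diffop_of_def by (simp add: sum_subtractf algebra_simps)
  have "diffop_of r (\<lambda>i. a i - b i) q = 0"
    by (rule diffop_zero) (use assms(3) in \<open>simp add: d a b\<close>)
  then show "L1 q = L2 q" by (simp add: d a b)
qed

lemma exist_aux: assumes "r \<le> n" "s \<le> Suc r"
  shows "\<exists>q. (\<forall>j. s \<le> j \<longrightarrow> q j = 0) \<and> (\<forall>k<s. Ksum n r q (monom 1 k) = L (monom 1 k))"
  using assms(2)
proof (induction s)
  case 0 then show ?case by (intro exI[of _ "\<lambda>j. 0"]) auto
next
  case (Suc s)
  then obtain q where q0: "\<forall>j. s \<le> j \<longrightarrow> q j = 0" and q1: "\<forall>k<s. Ksum n r q (monom 1 k) = L (monom 1 k)"
    by auto
  have sr: "s \<le> r" using Suc by simp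
  define v where "v = smult (1 / cK n r s s) (L (monom 1 s) - Ksum n r q (monom 1 s))"
  define q' where "q' = (\<lambda>j. q j + (if j = s then v else 0))"
  have K: "Ksum n r q' z = Ksum n r q z + v * Kop n r s z" for z
    unfolding q'_def Ksum_plus Ksum_single[OF sr] ..
  have cnz: "cK n r s s \<noteq> 0" using sr assms by (intro cK_nz) auto
  show ?case
  proof (intro exI[of _ q'] conjI allI impI)
    fix j assume "Suc s \<le> j" then show "q' j = 0" using q0 by (simp add: q'_def)
  next
    fix k assume k: "k < Suc s"
    show "Ksum n r q' (monom 1 k) = L (monom 1 k)"
    proof (cases "k < s")
      case True then show ?thesis using q1 by (simp add: K Kop_monom cK_zero1)
    next
      case False then have "k = s" using k by simp
      then show ?thesis using cnz by (simp add: K Kop_monom monom_0 v_def)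
    qed
  qed
qed

lemma exist_q: assumes "r \<le> n" "isdiff r L"
  shows "\<exists>q. (\<forall>j>r. q j = 0) \<and> L = Ksum n r q"
proof -
  obtain q where q0: "\<forall>j. Suc r \<le> j \<longrightarrow> q j = 0" and q1: "\<forall>k<Suc r. Ksum n r q (monom 1 k) = L (monom 1 k)"
    using exist_aux[OF assms(1), of "Suc r" L] by auto
  have "L = Ksum n r q"
    by (rule isdiff_eq[OF assms(2) isdiff_Ksum]) (use q1 in auto)
  then show ?thesis using q0 by (intro exI[of _ q]) auto
qed


lemma deg_bound:
  assumes mr: "m \<le> r" and rn: "r \<le> n" and P: "\<forall>q\<in>Pspace n. Ksum n r p q \<in> Pspace (n - m)"
    and jr: "j \<le> r"
  shows "degree (p j) \<le> r - m"
  using jr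
proof (induction "r - j" arbitrary: j rule: less_induct)
  case less
  define k where "k = n - r + j"
  have kn: "k \<le> n" and jk: "j \<le> k" using less rn by (auto simp: k_def)
  have "Ksum n r p (monom 1 k) \<in> Pspace (n - m)"
    using P kn by (auto simp: Pspace_def intro: order_trans[OF degree_monom_le])
  then have d1: "degree (Ksum n r p (monom 1 k)) \<le> n - m" by (simp add: Pspace_def)
  define R where "R = (\<Sum>j'\<in>{..r} - {j}. p j' * monom (cK n r j' k) (k - j'))"
  have eq: "Ksum n r p (monom 1 k) = p j * monom (cK n r j k) (n - r) + R"
    unfolding Ksum_monom R_def using less by (subst sum.remove[of _ j]) (auto simp: k_def)
  have dR: "degree R \<le> n - m"
    unfolding R_def
  proof (rule degree_sum_le)
    fix j' assume "j' \<in> {..r} - {j}"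
    then have j': "j' \<le> r" "j' \<noteq> j" by auto
    show "degree (p j' * monom (cK n r j' k) (k - j')) \<le> n - m"
    proof (cases "j' < j")
      case True
      then have "cK n r j' k = 0" using jk kn rn by (intro cK_zero2) (auto simp: k_def)
      then show ?thesis by simp
    next
      case False
      then have "r - j' < r - j" "j' \<le> r" using j' less by auto
      then have dp: "degree (p j') \<le> r - m" using less by blast
      have "degree (p j' * monom (cK n r j' k) (k - j')) \<le> degree (p j') + degree (monom (cK n r j' k) (k - j'))"
        by (rule degree_mult_le)
      also have "\<dots> \<le> (r - m) + (k - j')" using dp degree_monom_le by (intro add_mono) auto
      also have "\<dots> \<le> n - m" using False j' mr rn by (auto simp: k_def)
      finally show ?thesis .
    qed
  qed simp
  have "degree (p j * monom (cK n r j k) (n - r)) \<le> n - m"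
  proof -
    have "p j * monom (cK n r j k) (n - r) = Ksum n r p (monom 1 k) - R" using eq by simp
    also have "degree \<dots> \<le> n - m" using d1 dR by (meson degree_diff_le)
    finally show ?thesis .
  qed
  moreover have "cK n r j k \<noteq> 0" using jk less rn by (intro cK_nz) (auto simp: k_def)
  ultimately show ?case
    by (cases "p j = 0") (auto simp: degree_mult_eq degree_monom_eq)
qed


lemma conv: assumes "m \<le> r" "r \<le> n" "\<forall>j\<le>r. p j \<in> Pspace (r - m)"
  shows "Ksum n r p \<in> Lspace n r m"
proof -
  have "Ksum n r p q \<in> Pspace (n - m)" if q: "q \<in> Pspace n" for q
  proof -
    have "degree (Ksum n r p q) \<le> n - m"
      unfolding Ksum_def
    proof (rule degree_sum_le)
      fix j assume "j \<in> {..r}"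
      then have j: "j \<le> r" by simp
      have "degree (p j * Kop n r j q) \<le> degree (p j) + degree (Kop n r j q)" by (rule degree_mult_le)
      also have "\<dots> \<le> (r - m) + (n - r)"
        using assms j q by (intro add_mono deg_Kop) (auto simp: Pspace_def)
      also have "\<dots> = n - m" using assms by simp
      finally show "degree (p j * Kop n r j q) \<le> n - m" .
    qed simp
    then show ?thesis by (simp add: Pspace_def)
  qed
  moreover have "isdiff r (Ksum n r p)" by (rule isdiff_Ksum)
  ultimately show ?thesis unfolding Lspace_def isdiff_def by blast
qed

lemma part1: assumes "m \<le> r" "r \<le> n" "L \<in> Lspace n r m"
  shows "\<exists>!p. (\<forall>j\<le>r. p j \<in> Pspace (r - m)) \<and> (\<forall>j>r. p j = 0) \<and> L = Ksum n r p"
proof -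
  have "isdiff r L" using assms(3) unfolding Lspace_def isdiff_def by blast
  then obtain q where q0: "\<forall>j>r. q j = 0" and q1: "L = Ksum n r q" using exist_q assms by blast
  have P: "\<forall>z\<in>Pspace n. Ksum n r q z \<in> Pspace (n - m)" using assms(3) unfolding Lspace_def q1[symmetric] by blast
  have "\<forall>j\<le>r. q j \<in> Pspace (r - m)" using deg_bound[OF assms(1,2) P] by (simp add: Pspace_def)
  show ?thesis
  proof (rule ex1I[of _ q])
    show "(\<forall>j\<le>r. q j \<in> Pspace (r - m)) \<and> (\<forall>j>r. q j = 0) \<and> L = Ksum n r q"
      using \<open>\<forall>j\<le>r. q j \<in> Pspace (r - m)\<close> q0 q1 by blast
  next
    fix p assume p: "(\<forall>j\<le>r. p j \<in> Pspace (r - m)) \<and> (\<forall>j>r. p j = 0) \<and> L = Ksum n r p"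
    show "p = q"
    proof
      fix j show "p j = q j"
      proof (cases "j \<le> r")
        case True then show ?thesis using Ksum_unique[OF assms(2), of p q] p q1 by simp
      next
        case False then show ?thesis using p q0 by simp
      qed
    qed
  qed
qed


lemma vs_op: "vector_space op_scale"
  by unfold_locales (auto simp: op_scale_def plus_fun_def smult_add_right smult_add_left)

interpretation OS: vector_space op_scale by (rule vs_op)

lemma fun_sum_apply: "(\<Sum>x\<in>A. f x) z = (\<Sum>x\<in>A. f x z)"
  by (induction A rule: infinite_finite_induct) (auto simp: plus_fun_def)

lemma Ksum_sum: "Ksum n r (\<lambda>j. \<Sum>x\<in>A. f x j) = (\<Sum>x\<in>A. Ksum n r (f x))"
proof
  fix z
  show "Ksum n r (\<lambda>j. \<Sum>x\<in>A. f x j) z = (\<Sum>x\<in>A. Ksum n r (f x)) z"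
    unfolding fun_sum_apply Ksum_def by (simp add: sum_distrib_right) (rule sum.swap)
qed

lemma Ksum_scale: "Ksum n r (\<lambda>j. smult c (p j)) = op_scale c (Ksum n r p)"
  unfolding Ksum_def op_scale_def by (simp add: smult_sum_right)

lemma Ksum_cong: "(\<And>j. j \<le> r \<Longrightarrow> p j = p' j) \<Longrightarrow> Ksum n r p = Ksum n r p'"
  unfolding Ksum_def by auto

definition bvec :: "nat \<Rightarrow> nat \<Rightarrow> nat \<times> nat \<Rightarrow> diffop" where
  "bvec n r = (\<lambda>(i, j). Ksum n r (\<lambda>j'. if j' = j then monom 1 i else 0))"

lemma bvec_inj: assumes "r \<le> n" shows "inj_on (bvec n r) ({..r - m} \<times> {..r})"
proof (rule inj_onI)
  fix x y assume x: "x \<in> {..r - m} \<times> {..r}" and y: "y \<in> {..r - m} \<times> {..r}"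
    and e: "bvec n r x = bvec n r y"
  obtain i j where xij: "x = (i, j)" by (cases x)
  obtain i' j' where yij: "y = (i', j')" by (cases y)
  have "(\<lambda>j'. if j' = j then monom 1 i else (0::real poly)) j = (\<lambda>j''. if j'' = j' then monom 1 i' else 0) j"
    using e x by (intro Ksum_unique[OF assms]) (auto simp: bvec_def xij yij)
  then show "x = y" by (auto split: if_splits simp: monom_eq_iff' xij yij)
qed

lemma dim_main: assumes "m \<le> r" "r \<le> n"
  shows "OS.dim (Lspace n r m) = (r + 1) * (r - m + 1)"
proof -
  define I where "I = {..r - m} \<times> {..r}"
  define B where "B = bvec n r ` I"
  have inj: "inj_on (bvec n r) I" unfolding I_def by (rule bvec_inj[OF assms(2)])
  have fin: "finite B" unfolding B_def I_def by simp
  have fin': "finite I" unfolding I_def by simp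
  show ?thesis
  proof (rule OS.dim_unique[of B])
    show "B \<subseteq> Lspace n r m"
      unfolding B_def I_def bvec_def using assms
      by (auto intro!: conv simp: Pspace_def degree_monom_le intro: order_trans[OF degree_monom_le])
  next
    show "Lspace n r m \<subseteq> OS.span B"
    proof
      fix L assume L: "L \<in> Lspace n r m"
      then obtain p where p: "\<forall>j\<le>r. p j \<in> Pspace (r - m)" "\<forall>j>r. p j = 0" "L = Ksum n r p"
        using part1[OF assms] by blast
      have pj: "p j = (\<Sum>x\<in>I. smult (coeff (p (snd x)) (fst x)) (if j = snd x then monom 1 (fst x) else 0))"
        if j: "j \<le> r" for j
      proof -
        have "(\<Sum>x\<in>I. smult (coeff (p (snd x)) (fst x)) (if j = snd x then monom 1 (fst x) else 0))
            = (\<Sum>i\<in>{..r - m}. \<Sum>j'\<in>{..r}. smult (coeff (p j') i) (if j = j' then monom 1 i else 0))"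
          unfolding I_def by (simp add: sum.cartesian_product case_prod_unfold)
        also have "\<dots> = (\<Sum>i\<in>{..r - m}. monom (coeff (p j) i) i)"
        proof (intro sum.cong refl)
          fix i
          have "(\<Sum>j'\<in>{..r}. smult (coeff (p j') i) (if j = j' then monom 1 i else 0))
              = (\<Sum>j'\<in>{..r}. if j = j' then monom (coeff (p j) i) i else 0)"
            by (intro sum.cong) (auto simp: smult_monom)
          also have "\<dots> = monom (coeff (p j) i) i" using j by simp
          finally show "(\<Sum>j'\<in>{..r}. smult (coeff (p j') i) (if j = j' then monom 1 i else 0))
              = monom (coeff (p j) i) i" .
        qed
        also have "\<dots> = p j" using p(1) j by (intro poly_as_sum_of_monoms') (auto simp: Pspace_def)
        finally show ?thesis by simp
      qed
      have "L = Ksum n r (\<lambda>j. \<Sum>x\<in>I. smult (coeff (p (snd x)) (fst x)) (if j = snd x then monom 1 (fst x) else 0))"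
        unfolding p(3) by (rule Ksum_cong) (use pj in auto)
      also have "\<dots> = (\<Sum>x\<in>I. op_scale (coeff (p (snd x)) (fst x)) (bvec n r x))"
        unfolding Ksum_sum Ksum_scale bvec_def by (intro sum.cong) (auto simp: case_prod_unfold)
      also have "\<dots> \<in> OS.span B"
        by (intro OS.span_sum OS.span_scale OS.span_base) (auto simp: B_def)
      finally show "L \<in> OS.span B" .
    qed
  next
    show "\<not> OS.dependent B"
    proof
      assume "OS.dependent B"
      then obtain u where u1: "\<exists>v\<in>B. u v \<noteq> 0" and u2: "(\<Sum>v\<in>B. op_scale (u v) v) = 0"
        using OS.dependent_finite[OF fin] by blast
      define P where "P = (\<lambda>j. \<Sum>x\<in>I. smult (u (bvec n r x)) (if j = snd x then monom 1 (fst x) else 0))"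
      have "Ksum n r P = (\<Sum>x\<in>I. op_scale (u (bvec n r x)) (bvec n r x))"
        unfolding P_def Ksum_sum Ksum_scale bvec_def by (intro sum.cong) (auto simp: case_prod_unfold)
      also have "\<dots> = (\<Sum>v\<in>B. op_scale (u v) v)"
        unfolding B_def using inj by (simp add: sum.reindex)
      also have "\<dots> = Ksum n r (\<lambda>j. 0)" using u2 by (simp add: Ksum_def zero_fun_def)
      finally have KP: "Ksum n r P = Ksum n r (\<lambda>j. 0)" .
      obtain v where v: "v \<in> B" "u v \<noteq> 0" using u1 by blast
      then obtain i j where ij: "(i, j) \<in> I" "v = bvec n r (i, j)" unfolding B_def by auto
      have "P j = 0" using Ksum_unique[OF assms(2) KP, of j] ij by (auto simp: I_def)
      then have "coeff (P j) i = 0" by simp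
      moreover have "coeff (P j) i = (\<Sum>x\<in>I. if x = (i, j) then u (bvec n r x) else 0)"
        unfolding P_def coeff_sum by (intro sum.cong) (auto simp: coeff_monom)
      moreover have "\<dots> = u v" using ij fin' by (simp add: sum.delta)
      ultimately show False using v by simp
    qed
  next
    show "card B = (r + 1) * (r - m + 1)"
      unfolding B_def using inj by (simp add: card_image I_def card_cartesian_product)
  qed
qed

theorem mainTheorem18:
  fixes n r m :: nat
  assumes "m \<le> r" and "r \<le> n"
  shows "(\<forall>L \<in> Lspace n r m. \<exists>!p. (\<forall>j\<le>r. p j \<in> Pspace (r - m)) \<and> (\<forall>j>r. p j = 0)
                                      \<and> L = Ksum n r p)
       \<and> (\<forall>p. (\<forall>j\<le>r. p j \<in> Pspace (r - m)) \<longrightarrow> Ksum n r p \<in> Lspace n r m)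
       \<and> vector_space.dim op_scale (Lspace n r m) = (r + 1) * (r - m + 1)
       \<and> vector_space.dim op_scale (Lspace n r 0) = (r + 1) ^ 2"
proof -
  have 1: "\<forall>L \<in> Lspace n r m. \<exists>!p. (\<forall>j\<le>r. p j \<in> Pspace (r - m)) \<and> (\<forall>j>r. p j = 0)
                                      \<and> L = Ksum n r p"
    using part1[OF assms] by blast
  have 2: "\<forall>p. (\<forall>j\<le>r. p j \<in> Pspace (r - m)) \<longrightarrow> Ksum n r p \<in> Lspace n r m"
    using conv[OF assms] by blast
  have 3: "OS.dim (Lspace n r m) = (r + 1) * (r - m + 1)" by (rule dim_main[OF assms])
  have 4: "OS.dim (Lspace n r 0) = (r + 1) ^ 2"
    using dim_main[of 0 r n] assms by (simp add: power2_eq_square)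
  show ?thesis using 1 2 3 4 by blast
qed

end
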